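(* Let $X(t)$, $t\in T$, be a separable centered Gaussian random function with $\rho(s,t)=(\mathbb{E}(X(t)-X(s))^2)^{1/2}$, $(T,\rho)$ relatively compact, and covering numbers $N(\varepsilon)$. Let $\Psi$ be a function with $N(\varepsilon)\le\Psi(\varepsilon)$ for all $\varepsilon>0$, and assume there are $\varepsilon_0>0$ and $C_2>1$ with $\Psi(\varepsilon/2)\le C_2\Psi(\varepsilon)$ for all $0<\varepsilon\le\varepsilon_0$. Then for every $\varepsilon\in(0,\varepsilon_0)$ and every $r\in(\tfrac12,1)$, $$\prod_{k=0}^\infty\mathbb{P}(2^{-k}\varepsilon|\xi|\le r^k\varepsilon)^{N(2^{-k-1}\varepsilon)}\ge\exp\{-C_3(r)\Psi(\varepsilon)\},$$ where $\xi$ is standard normal and $C_3(r)$ depends only on $C_2$ and $r$.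
   Context: $N(\varepsilon)$ is the minimal number of points $t_1,\dots,t_n\in T$ such that every $t\in T$ has $\rho(t,t_i)\le\varepsilon$ for some $i$. *)

theory Defs
  imports "HOL-Probability.Probability"
begin

definition covering_number :: "'a set \<Rightarrow> ('a \<Rightarrow> 'a \<Rightarrow> real) \<Rightarrow> real \<Rightarrow> nat" where
  "covering_number T \<rho> \<epsilon> =
     (LEAST n. \<exists>F. F \<subseteq> T \<and> finite F \<and> card F = n \<and> (\<forall>t\<in>T. \<exists>s\<in>F. \<rho> t s \<le> \<epsilon>))"

text \<open>Relative compactness of the pseudometric space (T, rho), i.e. total boundedness.\<close>
definition relatively_compact :: "'a set \<Rightarrow> ('a \<Rightarrow> 'a \<Rightarrow> real) \<Rightarrow> bool" where
  "relatively_compact T \<rho> \<longleftrightarrow>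
     (\<forall>\<epsilon>>0. \<exists>F. F \<subseteq> T \<and> finite F \<and> (\<forall>t\<in>T. \<exists>s\<in>F. \<rho> t s \<le> \<epsilon>))"

definition centered_gaussian_process :: "'b measure \<Rightarrow> 'a set \<Rightarrow> ('a \<Rightarrow> 'b \<Rightarrow> real) \<Rightarrow> bool" where
  "centered_gaussian_process M T X \<longleftrightarrow>
     prob_space M \<and> (\<forall>t\<in>T. X t \<in> borel_measurable M) \<and>
     (\<forall>F c. finite F \<and> F \<subseteq> T \<longrightarrow>
        (AE \<omega> in M. (\<Sum>t\<in>F. c t * X t \<omega>) = 0) \<or>
        (\<exists>\<sigma>>0. distributed M lborel (\<lambda>\<omega>. \<Sum>t\<in>F. c t * X t \<omega>) (normal_density 0 \<sigma>)))"

definition gauss_dist :: "'b measure \<Rightarrow> ('a \<Rightarrow> 'b \<Rightarrow> real) \<Rightarrow> 'a \<Rightarrow> 'a \<Rightarrow> real" where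
  "gauss_dist M X s t = sqrt (integral\<^sup>L M (\<lambda>\<omega>. (X t \<omega> - X s \<omega>)^2))"

text \<open>Separability of the random function (sequential form of Doob's separability):
  there are a countable set D and a null set outside of which every value X t \<omega>
  is the limit of X (d n) \<omega> along some sequence d n in D converging to t.\<close>
definition separable_process :: "'b measure \<Rightarrow> 'a set \<Rightarrow> ('a \<Rightarrow> 'a \<Rightarrow> real) \<Rightarrow> ('a \<Rightarrow> 'b \<Rightarrow> real) \<Rightarrow> bool" where
  "separable_process M T \<rho> X \<longleftrightarrow>
     (\<exists>D N. D \<subseteq> T \<and> countable D \<and> N \<in> null_sets M \<and>
        (\<forall>\<omega>\<in>space M - N. \<forall>t\<in>T. \<exists>d. (\<forall>n. d n \<in> D) \<and>
            (\<lambda>n. \<rho> (d n) t) \<longlonglongrightarrow> 0 \<and> (\<lambda>n. X (d n) \<omega>) \<longlonglongrightarrow> X t \<omega>))"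

end

theory Submission
  imports Defs
begin

abbreviation "SN \<equiv> density lborel std_normal_density"

lemma SN_prob: "prob_space SN"
  by (rule prob_space_normal_density) simp

lemma SN_moment:
  fixes m :: nat
  shows "has_bochner_integral SN (\<lambda>x. x ^ (2*m)) (fact (2 * m) / (2^m * fact m))"
  by (rule has_bochner_integral_density) (auto simp: normal_density_nonneg std_normal_moment_even)

lemma SN_tail:
  assumes "t > 0"
  shows "measure SN {x. \<not> \<bar>x\<bar> \<le> t} \<le> (fact (2 * m) / (2^m * fact m)) / t^(2*m)"
proof -
  have int: "integrable SN (\<lambda>x. x ^ (2*m))" using SN_moment[of m] by (rule integrable.intros)
  have ie: "integral\<^sup>L SN (\<lambda>x. x ^ (2*m)) = fact (2 * m) / (2^m * fact m)"
    using SN_moment[of m] by (rule has_bochner_integral_integral_eq)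
  have sub: "{x. \<not> \<bar>x\<bar> \<le> t} \<subseteq> {x\<in>space SN. x^(2*m) \<ge> t^(2*m)}"
  proof
    fix x assume "x \<in> {x. \<not> \<bar>x\<bar> \<le> t}"
    then have "t \<le> \<bar>x\<bar>" by auto
    then have "t^(2*m) \<le> \<bar>x\<bar>^(2*m)" using assms by (intro power_mono) auto
    also have "\<bar>x\<bar>^(2*m) = x^(2*m)" by (simp add: power_even_abs)
    finally show "x \<in> {x\<in>space SN. x^(2*m) \<ge> t^(2*m)}" by simp
  qed
  interpret prob_space SN by (rule SN_prob)
  have "measure SN {x. \<not> \<bar>x\<bar> \<le> t} \<le> measure SN {x\<in>space SN. x^(2*m) \<ge> t^(2*m)}"
    by (rule finite_measure_mono[OF sub]) measurable
  also have "\<dots> \<le> integral\<^sup>L SN (\<lambda>x. x ^ (2*m)) / t^(2*m)"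
    by (rule integral_Markov_inequality_measure[OF int, where A="space SN"])
       (use assms in \<open>auto simp: zero_le_even_power\<close>)
  finally show ?thesis using ie by simp
qed

lemma SN_pos: "measure SN {x. \<bar>x\<bar> \<le> 1} > 0"
proof -
  let ?c = "std_normal_density 1"
  have c: "?c > 0" by (simp add: normal_density_pos)
  have "ennreal ?c * 2 = (\<integral>\<^sup>+ x. ennreal ?c * indicator {-1..1::real} x \<partial>lborel)"
    by (subst nn_integral_cmult_indicator) (auto intro: borel_closed)
  also have "\<dots> \<le> (\<integral>\<^sup>+ x. ennreal (std_normal_density x) * indicator {x. \<bar>x\<bar> \<le> 1} x \<partial>lborel)"
  proof (rule nn_integral_mono)
    fix x :: real
    show "ennreal ?c * indicator {-1..1} x \<le> ennreal (std_normal_density x) * indicator {x. \<bar>x\<bar> \<le> 1} x"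
    proof (cases "\<bar>x\<bar> \<le> 1")
      case True
      then have "x^2 \<le> 1" by (metis abs_ge_zero abs_mult_self_eq mult_le_one power2_eq_square)
      then have "exp (- (1 / 2)) \<le> exp (- (x\<^sup>2 / 2))" by simp
      then have "?c \<le> std_normal_density x" by (simp add: normal_density_def divide_right_mono)
      with True show ?thesis by (auto simp: indicator_def)
    qed (auto simp: indicator_def)
  qed
  also have "\<dots> = emeasure SN {x. \<bar>x\<bar> \<le> 1}"
    by (subst emeasure_density) auto
  finally have "ennreal (2 * ?c) \<le> emeasure SN {x. \<bar>x\<bar> \<le> 1}"
    using c by (simp add: ennreal_mult' mult.commute)
  moreover have "emeasure SN {x. \<bar>x\<bar> \<le> 1} = ennreal (measure SN {x. \<bar>x\<bar> \<le> 1})"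
    using SN_prob by (simp add: finite_measure.emeasure_eq_measure prob_space_def)
  ultimately have "2 * ?c \<le> measure SN {x. \<bar>x\<bar> \<le> 1}"
    by (simp add: ennreal_le_iff)
  with c show ?thesis by simp
qed


theorem lemma3:
  fixes C2 r :: real
  assumes "C2 > 1" and "1/2 < r" and "r < 1"
  shows "\<exists>C3::real. \<forall>(M::'b measure) (T::'a set) X (\<Psi>::real \<Rightarrow> real) \<epsilon>0 \<epsilon>.
     centered_gaussian_process M T X \<and>
     separable_process M T (gauss_dist M X) X \<and>
     relatively_compact T (gauss_dist M X) \<and>
     (\<forall>e>0. real (covering_number T (gauss_dist M X) e) \<le> \<Psi> e) \<and>
     \<epsilon>0 > 0 \<and> (\<forall>e. 0 < e \<and> e \<le> \<epsilon>0 \<longrightarrow> \<Psi> (e/2) \<le> C2 * \<Psi> e) \<and>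
     0 < \<epsilon> \<and> \<epsilon> < \<epsilon>0
     \<longrightarrow> (\<Prod>k. measure (density lborel std_normal_density)
               {x. (1/2)^k * \<epsilon> * \<bar>x\<bar> \<le> r^k * \<epsilon>}
             ^ covering_number T (gauss_dist M X) ((1/2)^(k+1) * \<epsilon>))
         \<ge> exp (- C3 * \<Psi> \<epsilon>)"
proof -
  define a where "a = 2 * r"
  have a1: "a > 1" using assms by (simp add: a_def)
  obtain n where n: "C2 < a ^ n" using real_arch_pow[OF a1] by blast
  define m where "m = n"
  have "a ^ n \<le> a ^ (2*m)" using a1 by (intro power_increasing) (auto simp: m_def)
  with n have am: "C2 < a ^ (2*m)" by simp
  define c where "c = 1 / a ^ (2*m)"
  have c0: "c > 0" using a1 by (simp add: c_def)
  define b where "b = C2 * c"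
  have b0: "b > 0" using c0 assms by (simp add: b_def)
  have b1: "b < 1" using am a1 by (simp add: b_def c_def)
  define K where "K = fact (2 * m) / (2^m * fact m :: real)"
  have K0: "K > 0" by (simp add: K_def)
  define p0 where "p0 = measure SN {x. \<bar>x\<bar> \<le> 1}"
  have p00: "p0 > 0" using SN_pos by (simp add: p0_def)
  define D where "D = C2 * K / p0"
  have D0: "D > 0" using assms K0 p00 by (simp add: D_def)
  interpret SNp: prob_space SN by (rule SN_prob)
  show ?thesis
  proof (intro exI[of _ "D / (1 - b)"] allI impI, elim conjE)
    fix M :: "'b measure" and T :: "'a set" and X \<Psi> \<epsilon>0 \<epsilon>
    assume cov: "\<forall>e>0. real (covering_number T (gauss_dist M X) e) \<le> \<Psi> e"
      and e00: "\<epsilon>0 > 0" and dbl: "\<forall>e. 0 < e \<and> e \<le> \<epsilon>0 \<longrightarrow> \<Psi> (e/2) \<le> C2 * \<Psi> e"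
      and e0: "0 < \<epsilon>" and ee0: "\<epsilon> < \<epsilon>0"
    define N where "N k = covering_number T (gauss_dist M X) ((1/2)^(k+1) * \<epsilon>)" for k
    define p where "p k = measure SN {x. (1/2)^k * \<epsilon> * \<bar>x\<bar> \<le> r^k * \<epsilon>}" for k
    have Psi0: "\<Psi> \<epsilon> \<ge> 0" using cov e0 by (metis of_nat_0_le_iff order_trans)
    have pk_eq: "p k = measure SN {x. \<bar>x\<bar> \<le> a^k}" for k
    proof -
      have pos: "(1/2)^k * \<epsilon> > 0" using e0 by simp
      have "r^k * \<epsilon> = (1/2)^k * \<epsilon> * a^k"
        by (simp add: a_def power_mult_distrib field_simps)
      then have "{x. (1/2)^k * \<epsilon> * \<bar>x\<bar> \<le> r^k * \<epsilon>} = {x. (1/2)^k * \<epsilon> * \<bar>x\<bar> \<le> (1/2)^k * \<epsilon> * a^k}"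
        by (simp only:)
      also have "\<dots> = {x. \<bar>x\<bar> \<le> a^k}"
        using mult_le_cancel_left_pos[OF pos] by blast
      finally have "{x. (1/2)^k * \<epsilon> * \<bar>x\<bar> \<le> r^k * \<epsilon>} = {x. \<bar>x\<bar> \<le> a^k}" .
      then show ?thesis by (simp add: p_def)
    qed
    have pge: "p k \<ge> p0" for k
    proof -
      have "1 \<le> a^k" using a1 by (simp add: one_le_power)
      then have "{x. \<bar>x\<bar> \<le> (1::real)} \<subseteq> {x. \<bar>x\<bar> \<le> a^k}" by auto
      then show ?thesis unfolding pk_eq p0_def by (intro SNp.finite_measure_mono) measurable
    qed
    have ppos: "p k > 0" for k using pge[of k] p00 by linarith
    have ple: "p k \<le> 1" for k by (simp add: p_def)
    have tail: "1 - p k \<le> K * c^k" for k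
    proof -
      have "measure SN {x. \<not> \<bar>x\<bar> \<le> a^k} = measure SN (space SN - {x. \<bar>x\<bar> \<le> a^k})"
        by (simp add: set_diff_eq)
      also have "\<dots> = 1 - p k" unfolding pk_eq by (rule SNp.prob_compl) measurable
      finally have eq: "1 - p k = measure SN {x. \<not> \<bar>x\<bar> \<le> a^k}" by simp
      have "measure SN {x. \<not> \<bar>x\<bar> \<le> a^k} \<le> K / (a^k)^(2*m)"
        unfolding K_def using a1 by (intro SN_tail) simp
      also have "K / (a^k)^(2*m) = K * c^k"
        by (simp add: c_def power_mult[symmetric] mult.commute power_one_over)
      finally show ?thesis using eq by simp
    qed
    have lnp: "ln (p k) \<ge> - (K * c^k) / p0" for k
    proof -
      have "ln (1 / p k) \<le> 1 / p k - 1" using ppos[of k] by (intro ln_le_minus_one) simp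
      then have "ln (p k) \<ge> 1 - 1 / p k" using ppos[of k] by (simp add: ln_div)
      moreover have "1 - 1 / p k = - ((1 - p k) / p k)" using ppos[of k] by (simp add: field_simps)
      moreover have "(1 - p k) / p k \<le> (1 - p k) / p0"
        using ppos[of k] pge[of k] p00 ple[of k] by (intro divide_left_mono) auto
      moreover have "(1 - p k) / p0 \<le> (K * c^k) / p0" using tail[of k] p00 by (intro divide_right_mono) auto
      ultimately show ?thesis by simp
    qed
    have lnp0: "ln (p k) \<le> 0" for k using ppos[of k] ple[of k] by simp
    have Psi_it: "\<Psi> ((1/2)^j * \<epsilon>) \<le> C2^j * \<Psi> \<epsilon>" for j
    proof (induction j)
      case 0 then show ?case by simp
    next
      case (Suc j)
      have h: "0 < (1/2)^j * \<epsilon> \<and> (1/2)^j * \<epsilon> \<le> \<epsilon>0"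
      proof
        show "0 < (1/2)^j * \<epsilon>" using e0 by simp
        have "(1/2::real)^j \<le> 1" by (simp add: power_le_one)
        then have "(1/2)^j * \<epsilon> \<le> 1 * \<epsilon>" using e0 by (intro mult_right_mono) auto
        then show "(1/2)^j * \<epsilon> \<le> \<epsilon>0" using ee0 by simp
      qed
      have "\<Psi> ((1/2)^(Suc j) * \<epsilon>) = \<Psi> (((1/2)^j * \<epsilon>) / 2)" by simp
      also have "\<dots> \<le> C2 * \<Psi> ((1/2)^j * \<epsilon>)" using dbl h by blast
      also have "\<dots> \<le> C2 * (C2^j * \<Psi> \<epsilon>)" using Suc assms by (intro mult_left_mono) auto
      finally show ?case by simp
    qed
    have Nle: "real (N k) \<le> C2^(k+1) * \<Psi> \<epsilon>" for k
    proof -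
      have "real (N k) \<le> \<Psi> ((1/2)^(k+1) * \<epsilon>)" unfolding N_def using cov e0 by simp
      also have "\<dots> \<le> C2^(k+1) * \<Psi> \<epsilon>" by (rule Psi_it)
      finally show ?thesis .
    qed
    define g where "g k = ln (p k ^ N k)" for k
    have g_eq: "g k = real (N k) * ln (p k)" for k using ppos[of k] by (simp add: g_def ln_realpow)
    have g_le0: "g k \<le> 0" for k using lnp0[of k] by (simp add: g_eq mult_nonneg_nonpos)
    have g_ge: "g k \<ge> - (\<Psi> \<epsilon> * D) * b^k" for k
    proof -
      have "g k \<ge> C2^(k+1) * \<Psi> \<epsilon> * ln (p k)"
        unfolding g_eq using Nle[of k] lnp0[of k] by (intro mult_right_mono_neg) auto
      moreover have "C2^(k+1) * \<Psi> \<epsilon> * ln (p k) \<ge> C2^(k+1) * \<Psi> \<epsilon> * (- (K * c^k) / p0)"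
        using lnp[of k] Psi0 assms by (intro mult_left_mono) auto
      moreover have "C2^(k+1) * \<Psi> \<epsilon> * (- (K * c^k) / p0) = - (\<Psi> \<epsilon> * D) * b^k"
        by (simp add: D_def b_def power_mult_distrib field_simps)
      ultimately show ?thesis by linarith
    qed
    have sumb: "summable (\<lambda>k. - (\<Psi> \<epsilon> * D) * b^k)"
      using b0 b1 by (intro summable_mult summable_geometric) simp
    have sumg: "summable g"
    proof (rule summable_comparison_test'[where g="\<lambda>k. (\<Psi> \<epsilon> * D) * b^k"])
      show "summable (\<lambda>k. (\<Psi> \<epsilon> * D) * b^k)"
        using b0 b1 by (intro summable_mult summable_geometric) simp
      fix k show "norm (g k) \<le> (\<Psi> \<epsilon> * D) * b^k" using g_ge[of k] g_le0[of k] by simp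
    qed
    have "(\<Prod>k. p k ^ N k) = (\<Prod>k. exp (g k))"
      using ppos by (simp add: g_def)
    also have "\<dots> = exp (suminf g)" by (rule prodinf_exp[OF sumg])
    finally have prodeq: "(\<Prod>k. p k ^ N k) = exp (suminf g)" .
    have "suminf (\<lambda>k. - (\<Psi> \<epsilon> * D) * b^k) \<le> suminf g"
      using sumb sumg g_ge by (intro suminf_le) auto
    moreover have "suminf (\<lambda>k. - (\<Psi> \<epsilon> * D) * b^k) = - (\<Psi> \<epsilon> * D) * (1 / (1 - b))"
      using b0 b1 by (subst suminf_mult) (auto simp: suminf_geometric)
    ultimately have "- (D / (1 - b)) * \<Psi> \<epsilon> \<le> suminf g" by (simp add: mult.commute)
    then have "exp (- (D / (1 - b)) * \<Psi> \<epsilon>) \<le> (\<Prod>k. p k ^ N k)"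
      unfolding prodeq by simp
    then show "exp (- (D / (1 - b)) * \<Psi> \<epsilon>) \<le> (\<Prod>k. measure (density lborel std_normal_density)
               {x. (1/2)^k * \<epsilon> * \<bar>x\<bar> \<le> r^k * \<epsilon>}
             ^ covering_number T (gauss_dist M X) ((1/2)^(k+1) * \<epsilon>))"
      by (simp add: p_def N_def)
  qed
qed

end
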